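(* Let $x_1,\dots,x_N\in\mathbb R^d$, let $V\in\mathbb R^{d\times d}$ be symmetric positive definite, let $\theta,\hat\theta\in\mathbb R^d$ and $\beta\ge0$ satisfy $\|\hat\theta-\theta\|_V\le\beta$, and let $Q_1,\dots,Q_N\ge0$. Define $h_m=x_m^\top\hat\theta+\beta\|x_m\|_{V^{-1}}$ and $\tilde\mu(n\mid S)=\frac{\exp(h_n)}{1+\sum_{m\in S}\exp(h_m)}$ for $n\in S\subseteq[N]$. Then for every nonempty $S\subseteq[N]$, $$\sum_{n\in S}\big(\tilde\mu(n\mid S)-\mu(n\mid S,\theta)\big)Q_n\le2\beta\max_{n\in S}\big(\|x_n\|_{V^{-1}}\,Q_n\big).$$
   Context: For $S\subseteq[N]$, $\theta\in\mathbb R^d$ and $n\in S$, $\mu(n\mid S,\theta)=\frac{\exp(x_n^\top\theta)}{1+\sum_{m\in S}\exp(x_m^\top\theta)}$. For a positive definite matrix $A$, $\|v\|_A=\sqrt{v^\top Av}$. *)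

theory Defs
  imports "HOL-Analysis.Analysis"
begin

definition wnorm :: "real^'d \<Rightarrow> real^'d^'d \<Rightarrow> real" where
  "wnorm v A = sqrt (v \<bullet> (A *v v))"

definition pos_def :: "real^'d^'d \<Rightarrow> bool" where
  "pos_def A \<longleftrightarrow> transpose A = A \<and> (\<forall>v. v \<noteq> 0 \<longrightarrow> v \<bullet> (A *v v) > 0)"

definition mnl :: "(nat \<Rightarrow> real^'d) \<Rightarrow> nat \<Rightarrow> nat set \<Rightarrow> real^'d \<Rightarrow> real" where
  "mnl x n S \<theta> = exp (x n \<bullet> \<theta>) / (1 + (\<Sum>m\<in>S. exp (x m \<bullet> \<theta>)))"

definition opt_util :: "(nat \<Rightarrow> real^'d) \<Rightarrow> real^'d^'d \<Rightarrow> real^'d \<Rightarrow> real \<Rightarrow> nat \<Rightarrow> real" where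
  "opt_util x V \<theta>h \<beta> m = x m \<bullet> \<theta>h + \<beta> * wnorm (x m) (matrix_inv V)"

definition mnl_opt :: "(nat \<Rightarrow> real^'d) \<Rightarrow> real^'d^'d \<Rightarrow> real^'d \<Rightarrow> real \<Rightarrow> nat \<Rightarrow> nat set \<Rightarrow> real" where
  "mnl_opt x V \<theta>h \<beta> n S =
     exp (opt_util x V \<theta>h \<beta> n) / (1 + (\<Sum>m\<in>S. exp (opt_util x V \<theta>h \<beta> m)))"

end

theory Submission
  imports Defs
begin

lemma pd_inv:
  fixes V :: "real^'d^'d"
  assumes "pos_def V"
  shows "V ** matrix_inv V = mat 1"
proof -
  have "inj ((*v) V)"
  proof (rule injI)
    fix a b assume h: "V *v a = V *v b"
    have "V *v (a - b) = 0" using h by (simp add: matrix_vector_mult_diff_distrib)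
    hence "(a - b) \<bullet> (V *v (a - b)) = 0" by simp
    thus "a = b" using assms unfolding pos_def_def by (metis less_irrefl eq_iff_diff_eq_0)
  qed
  hence "invertible V" using invertible_left_inverse matrix_left_invertible_injective by blast
  hence "\<exists>A'. V ** A' = mat 1 \<and> A' ** V = mat 1" unfolding invertible_def .
  hence "V ** matrix_inv V = mat 1 \<and> matrix_inv V ** V = mat 1"
    unfolding matrix_inv_def by (rule someI_ex)
  thus ?thesis by simp
qed

lemma pd_sym:
  fixes V :: "real^'d^'d"
  assumes "pos_def V"
  shows "a \<bullet> (V *v b) = b \<bullet> (V *v a)"
proof -
  have "a \<bullet> (V *v b) = (a v* V) \<bullet> b" by (simp add: dot_lmul_matrix)
  also have "\<dots> = (transpose V *v a) \<bullet> b" by simp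
  also have "\<dots> = b \<bullet> (V *v a)" using assms unfolding pos_def_def by (simp add: inner_commute)
  finally show ?thesis .
qed

lemma pd_nonneg:
  fixes V :: "real^'d^'d"
  assumes "pos_def V"
  shows "v \<bullet> (V *v v) \<ge> 0"
  using assms unfolding pos_def_def by (cases "v = 0") (auto intro: less_imp_le)

lemma pd_cs:
  fixes V :: "real^'d^'d"
  assumes "pos_def V"
  shows "(p \<bullet> (V *v z))^2 \<le> (p \<bullet> (V *v p)) * (z \<bullet> (V *v z))"
proof -
  define a where "a = z \<bullet> (V *v z)"
  define b where "b = p \<bullet> (V *v z)"
  define c where "c = p \<bullet> (V *v p)"
  have q: "c + 2*t*b + t^2 * a \<ge> 0" for t
  proof -
    have "(p + t *\<^sub>R z) \<bullet> (V *v (p + t *\<^sub>R z)) = c + 2*t*b + t^2*a"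
      using pd_sym[OF assms, of z p]
      by (simp add: a_def b_def c_def matrix_vector_right_distrib matrix_vector_mult_scaleR
          inner_add_left inner_add_right power2_eq_square algebra_simps)
    thus ?thesis using pd_nonneg[OF assms, of "p + t *\<^sub>R z"] by simp
  qed
  have a0: "a \<ge> 0" unfolding a_def by (rule pd_nonneg[OF assms])
  show ?thesis
  proof (cases "a = 0")
    case True
    show ?thesis
    proof (cases "b = 0")
      case True thus ?thesis using \<open>a = 0\<close> by (simp add: a_def b_def)
    next
      case False
      have "c + 2*(-(c+1)/(2*b))*b + (-(c+1)/(2*b))^2 * a \<ge> 0" by (rule q)
      hence "c + 2*(-(c+1)/(2*b))*b \<ge> 0" using \<open>a = 0\<close> by simp
      moreover have "2*(-(c+1)/(2*b))*b = -(c+1)" using False by (simp add: field_simps)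
      ultimately show ?thesis by simp
    qed
  next
    case False
    hence ap: "a > 0" using a0 by simp
    have "c + 2*(-b/a)*b + (-b/a)^2 * a \<ge> 0" by (rule q)
    moreover have "c + 2*(-b/a)*b + (-b/a)^2 * a = (c*a - b^2)/a" using ap
      by (simp add: field_simps power2_eq_square)
    ultimately have "(c*a - b^2)/a \<ge> 0" by simp
    hence "c*a - b^2 \<ge> 0" using ap by (simp add: divide_nonneg_pos zero_le_divide_iff)
    thus ?thesis by (simp add: a_def b_def c_def mult.commute)
  qed
qed

lemma pd_inv_nonneg:
  fixes V :: "real^'d^'d"
  assumes "pos_def V"
  shows "y \<bullet> (matrix_inv V *v y) \<ge> 0"
proof -
  define p where "p = matrix_inv V *v y"
  have I: "V ** matrix_inv V = mat 1" by (rule pd_inv[OF assms(1)])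
  have Vp: "V *v p = y" unfolding p_def by (simp add: matrix_vector_mul_assoc I)
  have "p \<bullet> (V *v p) = y \<bullet> (matrix_inv V *v y)" using Vp p_def by (simp add: inner_commute)
  thus ?thesis using pd_nonneg[OF assms, of p] by simp
qed

lemma dev_bound:
  fixes V :: "real^'d^'d"
  assumes "pos_def V" and "wnorm z V \<le> \<beta>"
  shows "\<bar>y \<bullet> z\<bar> \<le> \<beta> * wnorm y (matrix_inv V)"
proof -
  define p where "p = matrix_inv V *v y"
  have I: "V ** matrix_inv V = mat 1" by (rule pd_inv[OF assms(1)])
  have Vp: "V *v p = y" unfolding p_def by (simp add: matrix_vector_mul_assoc I)
  have e1: "p \<bullet> (V *v z) = y \<bullet> z" using pd_sym[OF assms(1), of p z] Vp by (simp add: inner_commute)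
  have e2: "p \<bullet> (V *v p) = y \<bullet> (matrix_inv V *v y)" using Vp p_def by (simp add: inner_commute)
  have "(y \<bullet> z)^2 \<le> (y \<bullet> (matrix_inv V *v y)) * (z \<bullet> (V *v z))"
    using pd_cs[OF assms(1), of p z] e1 e2 by simp
  hence "sqrt ((y \<bullet> z)^2) \<le> sqrt ((y \<bullet> (matrix_inv V *v y)) * (z \<bullet> (V *v z)))"
    using real_sqrt_le_mono by blast
  hence "\<bar>y \<bullet> z\<bar> \<le> wnorm y (matrix_inv V) * wnorm z V"
    unfolding wnorm_def by (simp add: real_sqrt_mult)
  also have "\<dots> \<le> wnorm y (matrix_inv V) * \<beta>"
    using assms(2) pd_inv_nonneg[OF assms(1), of y] by (intro mult_left_mono) (auto simp: wnorm_def)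
  finally show ?thesis by (simp add: mult.commute)
qed

theorem mainTheorem7:
  fixes N :: nat and x :: "nat \<Rightarrow> real^'d" and V :: "real^'d^'d"
    and \<theta> \<theta>h :: "real^'d" and \<beta> :: real and Q :: "nat \<Rightarrow> real"
    and S :: "nat set"
  assumes "pos_def V"
    and "\<beta> \<ge> 0"
    and "wnorm (\<theta>h - \<theta>) V \<le> \<beta>"
    and "\<forall>n\<in>{1..N}. Q n \<ge> 0"
    and "S \<subseteq> {1..N}" and "S \<noteq> {}"
  shows "(\<Sum>n\<in>S. (mnl_opt x V \<theta>h \<beta> n S - mnl x n S \<theta>) * Q n)
           \<le> 2 * \<beta> * Max ((\<lambda>n. wnorm (x n) (matrix_inv V) * Q n) ` S)"
proof -
  define w where "w n = wnorm (x n) (matrix_inv V)" for n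
  define h where "h n = opt_util x V \<theta>h \<beta> n" for n
  define u where "u n = x n \<bullet> \<theta>" for n
  define M where "M = Max ((\<lambda>n. w n * Q n) ` S)"
  define A where "A = (\<Sum>m\<in>S. exp (u m))"
  define B where "B = (\<Sum>m\<in>S. exp (h m))"
  have fin: "finite S" using assms(5) finite_subset by blast
  have Qn: "Q n \<ge> 0" if "n \<in> S" for n using assms(4,5) that by auto
  have wn: "w n \<ge> 0" for n unfolding w_def wnorm_def using pd_inv_nonneg[OF assms(1)] by simp
  have Mge: "w n * Q n \<le> M" if "n \<in> S" for n unfolding M_def using fin that by simp
  obtain n0 where "n0 \<in> S" using assms(6) by blast
  have M0: "M \<ge> 0" using Mge[OF \<open>n0 \<in> S\<close>] wn[of n0] Qn[OF \<open>n0 \<in> S\<close>]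
    by (meson order_trans zero_le_mult_iff)
  have hu: "u n \<le> h n \<and> h n - u n \<le> 2 * \<beta> * w n" for n
  proof -
    have "\<bar>x n \<bullet> (\<theta>h - \<theta>)\<bar> \<le> \<beta> * w n" unfolding w_def
      by (rule dev_bound[OF assms(1,3)])
    thus ?thesis unfolding h_def u_def opt_util_def w_def by (simp add: inner_diff_right abs_le_iff)
  qed
  have AB: "A \<le> B" unfolding A_def B_def by (rule sum_mono) (simp add: hu)
  have A0: "A \<ge> 0" unfolding A_def by (simp add: sum_nonneg)
  have B0: "B \<ge> 0" unfolding B_def by (simp add: sum_nonneg)
  have tm: "(exp (h n) / (1 + B) - exp (u n) / (1 + A)) * Q n \<le> exp (h n) / (1 + B) * (2 * \<beta> * M)"
    if "n \<in> S" for n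
  proof -
    have "exp (u n) / (1 + B) \<le> exp (u n) / (1 + A)"
      using AB A0 by (intro divide_left_mono) auto
    hence s1: "exp (h n) / (1 + B) - exp (u n) / (1 + A) \<le> (exp (h n) - exp (u n)) / (1 + B)"
      by (simp add: diff_divide_distrib)
    have "exp (u n - h n) \<ge> 1 + (u n - h n)" by (rule exp_ge_add_one_self)
    hence "exp (u n) \<ge> exp (h n) * (1 - (h n - u n))"
      by (simp add: exp_diff field_simps)
    hence "exp (h n) - exp (u n) \<le> exp (h n) * (h n - u n)" by (simp add: algebra_simps)
    also have "\<dots> \<le> exp (h n) * (2 * \<beta> * w n)" using hu[of n] by simp
    finally have s2: "exp (h n) - exp (u n) \<le> exp (h n) * (2 * \<beta> * w n)" .
    have "(exp (h n) / (1 + B) - exp (u n) / (1 + A)) * Q n \<le> (exp (h n) - exp (u n)) / (1 + B) * Q n"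
      using s1 Qn[OF that] by (rule mult_right_mono)
    also have "\<dots> \<le> exp (h n) * (2 * \<beta> * w n) / (1 + B) * Q n"
      using s2 B0 Qn[OF that] by (intro mult_right_mono divide_right_mono) auto
    also have "\<dots> = exp (h n) / (1 + B) * (2 * \<beta> * (w n * Q n))" by simp
    also have "\<dots> \<le> exp (h n) / (1 + B) * (2 * \<beta> * M)"
      using Mge[OF that] assms(2) B0 by (intro mult_left_mono) auto
    finally show ?thesis .
  qed
  have "(\<Sum>n\<in>S. (mnl_opt x V \<theta>h \<beta> n S - mnl x n S \<theta>) * Q n)
      = (\<Sum>n\<in>S. (exp (h n) / (1 + B) - exp (u n) / (1 + A)) * Q n)"
    unfolding mnl_opt_def mnl_def h_def u_def A_def B_def by simp
  also have "\<dots> \<le> (\<Sum>n\<in>S. exp (h n) / (1 + B) * (2 * \<beta> * M))"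
    by (rule sum_mono) (rule tm)
  also have "\<dots> = B / (1 + B) * (2 * \<beta> * M)"
    unfolding B_def by (simp add: sum_distrib_right sum_divide_distrib)
  also have "\<dots> \<le> 1 * (2 * \<beta> * M)"
    using B0 M0 assms(2) by (intro mult_right_mono) auto
  finally show ?thesis unfolding M_def w_def by simp
qed

end
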